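(* For $R\in\mathbb C$ let $$\phi(R)=\begin{pmatrix} R & 1+R\\ 1-R & -R\end{pmatrix}.$$ For a $2\times2$ matrix $X=\begin{pmatrix}\alpha&\beta\\ \gamma&\delta\end{pmatrix}$ and $1\le i<j\le 3$, let $X_{ij}$ denote the $3\times3$ matrix equal to the identity except $(X_{ij})_{ii}=\alpha$, $(X_{ij})_{ij}=\beta$, $(X_{ij})_{ji}=\gamma$, $(X_{ij})_{jj}=\delta$, and write $\phi_{ij}(R)=(\phi(R))_{ij}$. Let $x_1,x_2,x_3\in\mathbb C$ with $D:=x_1+x_3-x_1x_2x_3\neq 0$, and put $$x_1'=\frac{x_1x_2}{D},\qquad x_2'=D,\qquad x_3'=\frac{x_2x_3}{D}.$$ Then $$\phi_{12}(x_1)\,\phi_{13}(x_2)\,\phi_{23}(x_3)=\phi_{23}(x_3')\,\phi_{13}(x_2')\,\phi_{12}(x_1').$$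
   Context: $\phi(R)$ is the "Ohm–Yang–Baxter operator" attached to black vertices of the medial graph of an electrical network. *)

theory Defs
  imports "HOL-Analysis.Analysis"
begin

text \<open>2x2 matrices indexed by type 2 (index 1 = first, 2 = second row/col);
3x3 matrices indexed by type 3.  We write the 3x3 index k (1<=k<=3) as the
element idx3 k of type 3.\<close>

definition idx3 :: "nat \<Rightarrow> 3" where
  "idx3 k = of_nat (k - 1)"

definition idx2 :: "nat \<Rightarrow> 2" where
  "idx2 k = of_nat (k - 1)"

definition phi :: "complex \<Rightarrow> complex^2^2" where
  "phi R = (\<chi> a b. if a = idx2 1 then (if b = idx2 1 then R else 1 + R)
                      else (if b = idx2 1 then 1 - R else - R))"

definition embed :: "complex^2^2 \<Rightarrow> nat \<Rightarrow> nat \<Rightarrow> complex^3^3" where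
  "embed X i j = (\<chi> a b.
     if a = idx3 i \<and> b = idx3 i then X $ idx2 1 $ idx2 1
     else if a = idx3 i \<and> b = idx3 j then X $ idx2 1 $ idx2 2
     else if a = idx3 j \<and> b = idx3 i then X $ idx2 2 $ idx2 1
     else if a = idx3 j \<and> b = idx3 j then X $ idx2 2 $ idx2 2
     else (if a = b then 1 else 0))"

definition phi_ij :: "nat \<Rightarrow> nat \<Rightarrow> complex \<Rightarrow> complex^3^3" where
  "phi_ij i j R = embed (phi R) i j"

end

theory Submission
  imports Defs
begin
lemma idx: "idx3 1 = 3" "idx3 2 = 1" "idx3 3 = 2" "idx2 1 = 2" "idx2 2 = 1"
  by (simp_all add: idx3_def idx2_def)
lemma d3: "(3::3) \<noteq> 1" "(3::3) \<noteq> 2" "(1::3) \<noteq> 2" "(1::3) \<noteq> 3" "(2::3) \<noteq> 3" "(2::3) \<noteq> 1"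
 "(2::2) \<noteq> 1" "(1::2) \<noteq> 2" by simp_all
lemma ph: "phi R $ 2 $ 2 = R" "phi R $ 2 $ 1 = 1 + R" "phi R $ 1 $ 2 = 1 - R" "phi R $ 1 $ 1 = - R"
  unfolding phi_def idx by (simp_all add: d3)
lemma P: "phi_ij 1 2 R = (\<chi> a b. if a = 3 \<and> b = 3 then R else if a = 3 \<and> b = 1 then 1 + R else if a = 1 \<and> b = 3 then 1 - R else if a = 1 \<and> b = 1 then -R else if a = b then 1 else 0)"
  unfolding phi_ij_def embed_def idx ph by (rule refl)
theorem theorem3p6:
  fixes x1 x2 x3 :: complex
  assumes "x1 + x3 - x1 * x2 * x3 \<noteq> 0"
  shows "let D = x1 + x3 - x1 * x2 * x3;
             x1' = x1 * x2 / D; x2' = D; x3' = x2 * x3 / D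
         in phi_ij 1 2 x1 ** phi_ij 1 3 x2 ** phi_ij 2 3 x3
            = phi_ij 2 3 x3' ** phi_ij 1 3 x2' ** phi_ij 1 2 x1'"
proof -
  define D where "D = x1 + x3 - x1 * x2 * x3"
  have DZ: "D \<noteq> 0" using assms D_def by simp
  show ?thesis
    unfolding Let_def D_def[symmetric] phi_ij_def embed_def idx ph
    apply (simp add: vec_eq_iff matrix_matrix_mult_def sum_3 forall_3 d3)
    apply (simp add: DZ field_simps)
    apply (unfold D_def)
    apply (intro conjI; algebra)
    done
qed
end
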